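(* Let $\mathcal{Q}\subseteq 2^E$ ($E$ finite) be a simplicial complex (a nonempty family closed under taking subsets). If $\mathcal{Q}$ is weakly Rayleigh then $\mathcal{Q}$ is the set of independent sets of a matroid on $E$.
   Context: For $\omega:2^E\to[0,\infty)$ not identically zero, $Z(\omega;\mathbf{y})=\sum_S\omega(S)\prod_{e\in S}y_e$; with subscripts denoting partial derivatives, $Z$ is Rayleigh if $Z_eZ_f-Z_{ef}Z\ge0$ for all distinct $e,f$ and all positive $\mathbf{y}$. $\mathcal{Q}$ is weakly Rayleigh if some $\omega\ge0$ with $\{S:\omega(S)>0\}=\mathcal{Q}$ has $Z(\omega;\mathbf{y})$ Rayleigh. *)

theory Defs
  imports "HOL-Analysis.Analysis"
begin

definition Zpoly :: "'a set \<Rightarrow> ('a set \<Rightarrow> real) \<Rightarrow> ('a \<Rightarrow> real) \<Rightarrow> real" where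
  "Zpoly E \<omega> y = (\<Sum>S\<in>Pow E. \<omega> S * (\<Prod>e\<in>S. y e))"

definition pderiv_var :: "'a \<Rightarrow> (('a \<Rightarrow> real) \<Rightarrow> real) \<Rightarrow> ('a \<Rightarrow> real) \<Rightarrow> real" where
  "pderiv_var e F y = deriv (\<lambda>t. F (y(e := t))) (y e)"

definition rayleigh :: "'a set \<Rightarrow> (('a \<Rightarrow> real) \<Rightarrow> real) \<Rightarrow> bool" where
  "rayleigh E Z \<longleftrightarrow>
     (\<forall>e\<in>E. \<forall>f\<in>E. e \<noteq> f \<longrightarrow>
        (\<forall>y. (\<forall>x\<in>E. y x > 0) \<longrightarrow>
           pderiv_var e Z y * pderiv_var f Z y
             - pderiv_var e (pderiv_var f Z) y * Z y \<ge> 0))"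

definition weakly_rayleigh :: "'a set \<Rightarrow> 'a set set \<Rightarrow> bool" where
  "weakly_rayleigh E Q \<longleftrightarrow>
     (\<exists>\<omega> :: 'a set \<Rightarrow> real.
        (\<forall>S\<in>Pow E. \<omega> S \<ge> 0) \<and>
        (\<exists>S\<in>Pow E. \<omega> S \<noteq> 0) \<and>
        {S\<in>Pow E. \<omega> S > 0} = Q \<and>
        rayleigh E (Zpoly E \<omega>))"

definition simplicial_complex :: "'a set \<Rightarrow> 'a set set \<Rightarrow> bool" where
  "simplicial_complex E Q \<longleftrightarrow>
     Q \<subseteq> Pow E \<and> Q \<noteq> {} \<and> (\<forall>S\<in>Q. \<forall>T. T \<subseteq> S \<longrightarrow> T \<in> Q)"

definition matroid_indep :: "'a set \<Rightarrow> 'a set set \<Rightarrow> bool" where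
  "matroid_indep E I \<longleftrightarrow>
     I \<subseteq> Pow E \<and> {} \<in> I \<and>
     (\<forall>S\<in>I. \<forall>T. T \<subseteq> S \<longrightarrow> T \<in> I) \<and>
     (\<forall>A\<in>I. \<forall>B\<in>I. card A < card B \<longrightarrow> (\<exists>x\<in>B - A. insert x A \<in> I))"

end

theory Submission
  imports Defs
begin

definition Delw :: "'a \<Rightarrow> ('a set \<Rightarrow> real) \<Rightarrow> 'a set \<Rightarrow> real" where
  "Delw e w S = (if e \<in> S then 0 else w S)"

definition Dvw :: "'a \<Rightarrow> ('a set \<Rightarrow> real) \<Rightarrow> 'a set \<Rightarrow> real" where
  "Dvw e w S = (if e \<in> S then 0 else w (insert e S))"

lemma sum_Pow_split:
  assumes "finite E" "e \<in> E"
  shows "(\<Sum>S\<in>Pow E. g S) = (\<Sum>S\<in>Pow (E-{e}). g S + g (insert e S))"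
proof -
  have E: "E = insert e (E-{e})" using assms by blast
  have P: "Pow E = Pow (E-{e}) \<union> insert e ` Pow (E-{e})"
    by (metis E Pow_insert)
  have disj: "Pow (E-{e}) \<inter> insert e ` Pow (E-{e}) = {}" by auto
  have inj: "inj_on (insert e) (Pow (E-{e}))"
    by (rule inj_onI) (metis Diff_insert_absorb PowD insert_subset subset_Diff_insert)
  have fin: "finite (Pow (E-{e}))" using assms by simp
  have "(\<Sum>S\<in>Pow E. g S) = (\<Sum>S\<in>Pow (E-{e}). g S) + (\<Sum>S\<in>insert e ` Pow (E-{e}). g S)"
    unfolding P by (rule sum.union_disjoint) (use fin disj in auto)
  also have "(\<Sum>S\<in>insert e ` Pow (E-{e}). g S) = (\<Sum>S\<in>Pow (E-{e}). g (insert e S))"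
    by (rule sum.reindex[OF inj, unfolded comp_def])
  finally show ?thesis by (simp add: sum.distrib)
qed

lemma Zpoly_split:
  assumes "finite E" "e \<in> E"
  shows "Zpoly E w y = Zpoly E (Delw e w) y + y e * Zpoly E (Dvw e w) y"
proof -
  have "Zpoly E w y = (\<Sum>S\<in>Pow (E-{e}). w S * prod y S + w (insert e S) * prod y (insert e S))"
    unfolding Zpoly_def by (rule sum_Pow_split[OF assms])
  also have "\<dots> = (\<Sum>S\<in>Pow (E-{e}). (Delw e w S * prod y S + Delw e w (insert e S) * prod y (insert e S))
       + y e * (Dvw e w S * prod y S + Dvw e w (insert e S) * prod y (insert e S)))"
  proof (rule sum.cong)
    fix S assume S: "S \<in> Pow (E-{e})"
    hence "e \<notin> S" "finite S" using assms finite_subset by auto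
    thus "w S * prod y S + w (insert e S) * prod y (insert e S) =
      (Delw e w S * prod y S + Delw e w (insert e S) * prod y (insert e S))
       + y e * (Dvw e w S * prod y S + Dvw e w (insert e S) * prod y (insert e S))"
      by (simp add: Delw_def Dvw_def)
  qed simp
  also have "\<dots> = Zpoly E (Delw e w) y + y e * Zpoly E (Dvw e w) y"
    unfolding Zpoly_def sum_Pow_split[OF assms] by (simp add: sum.distrib sum_distrib_left distrib_left)
  finally show ?thesis .
qed

lemma Zpoly_indep:
  assumes "\<And>S. e \<in> S \<Longrightarrow> v S = 0"
  shows "Zpoly E v (y(e:=t)) = Zpoly E v y"
  unfolding Zpoly_def
proof (rule sum.cong)
  fix S assume "S \<in> Pow E"
  show "v S * prod (y(e := t)) S = v S * prod y S"
  proof (cases "e \<in> S")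
    case True thus ?thesis using assms by simp
  next
    case False
    hence "prod (y(e := t)) S = prod y S" by (intro prod.cong) auto
    thus ?thesis by simp
  qed
qed simp

lemma pderiv_Zpoly:
  assumes "finite E" "e \<in> E"
  shows "pderiv_var e (Zpoly E w) = Zpoly E (Dvw e w)"
proof
  fix y
  have eq: "(\<lambda>t. Zpoly E w (y(e:=t))) = (\<lambda>t. Zpoly E (Delw e w) y + t * Zpoly E (Dvw e w) y)"
  proof
    fix t
    show "Zpoly E w (y(e:=t)) = Zpoly E (Delw e w) y + t * Zpoly E (Dvw e w) y"
      using Zpoly_split[OF assms, of w "y(e:=t)"]
        Zpoly_indep[of e "Delw e w" E y t] Zpoly_indep[of e "Dvw e w" E y t]
      by (simp add: Delw_def Dvw_def)
  qed
  have "((\<lambda>t. Zpoly E (Delw e w) y + t * Zpoly E (Dvw e w) y) has_field_derivative Zpoly E (Dvw e w) y) (at (y e))"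
    by (auto intro!: derivative_eq_intros)
  hence "deriv (\<lambda>t. Zpoly E w (y(e:=t))) (y e) = Zpoly E (Dvw e w) y"
    unfolding eq by (rule DERIV_imp_deriv)
  thus "pderiv_var e (Zpoly E w) y = Zpoly E (Dvw e w) y"
    unfolding pderiv_var_def .
qed

lemma Zpoly_nonneg:
  assumes "\<forall>S\<in>Pow E. v S \<ge> 0" "\<forall>x. y x \<ge> 0"
  shows "Zpoly E v y \<ge> 0"
  unfolding Zpoly_def using assms by (intro sum_nonneg mult_nonneg_nonneg prod_nonneg) auto

lemma Zpoly_lower:
  assumes "finite E" "\<forall>S\<in>Pow E. v S \<ge> 0" "\<forall>x. y x \<ge> 0" "S0 \<in> Pow E"
  shows "v S0 * prod y S0 \<le> Zpoly E v y"
  unfolding Zpoly_def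
  using assms by (intro member_le_sum mult_nonneg_nonneg prod_nonneg) auto

lemma prod_tX:
  assumes "finite S"
  shows "prod (\<lambda>x. if x \<in> X then t else (1::real)) S = t ^ card (S \<inter> X)"
proof -
  have "prod (\<lambda>x. if x \<in> X then t else (1::real)) S = prod (\<lambda>x. t) (S \<inter> X)"
    using assms by (simp add: prod.If_cases Int_def)
  thus ?thesis by simp
qed

lemma Zpoly_upper:
  assumes "finite E" "\<forall>S\<in>Pow E. v S \<ge> 0" "(t::real) \<ge> 1"
    and "\<forall>S\<in>Pow E. v S \<noteq> 0 \<longrightarrow> card (S \<inter> X) + 1 \<le> k"
  shows "t * Zpoly E v (\<lambda>x. if x \<in> X then t else 1) \<le> (\<Sum>S\<in>Pow E. v S) * t ^ k"
proof -
  have "t * Zpoly E v (\<lambda>x. if x \<in> X then t else 1) = (\<Sum>S\<in>Pow E. v S * t ^ (card (S \<inter> X) + 1))"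
    unfolding Zpoly_def sum_distrib_left
  proof (rule sum.cong)
    fix S assume "S \<in> Pow E"
    hence "finite S" using assms(1) finite_subset by auto
    thus "t * (v S * prod (\<lambda>x. if x \<in> X then t else 1) S) = v S * t ^ (card (S \<inter> X) + 1)"
      by (simp add: prod_tX)
  qed simp
  also have "\<dots> \<le> (\<Sum>S\<in>Pow E. v S * t ^ k)"
  proof (rule sum_mono)
    fix S assume S: "S \<in> Pow E"
    show "v S * t ^ (card (S \<inter> X) + 1) \<le> v S * t ^ k"
    proof (cases "v S = 0")
      case False
      hence "t ^ (card (S \<inter> X) + 1) \<le> t ^ k" using assms S by (intro power_increasing) auto
      thus ?thesis using assms S by (intro mult_left_mono) auto
    qed simp
  qed
  also have "\<dots> = (\<Sum>S\<in>Pow E. v S) * t ^ k" by (simp add: sum_distrib_right)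
  finally show ?thesis .
qed

lemma Dvw_Delw_comm: "e \<noteq> f \<Longrightarrow> Dvw f (Delw e w) = Delw e (Dvw f w)"
  by (auto simp: fun_eq_iff Dvw_def Delw_def)

lemma Dvw_Dvw_comm: "Dvw f (Dvw e w) = Dvw e (Dvw f w)"
  by (auto simp: fun_eq_iff Dvw_def insert_commute)

lemma Dvw_nonneg: "e \<in> E \<Longrightarrow> \<forall>S\<in>Pow E. w S \<ge> 0 \<Longrightarrow> \<forall>S\<in>Pow E. Dvw e w S \<ge> 0"
  by (auto simp: Dvw_def)

lemma Delw_nonneg: "\<forall>S\<in>Pow E. w S \<ge> 0 \<Longrightarrow> \<forall>S\<in>Pow E. Delw e w S \<ge> 0"
  by (auto simp: Delw_def)

lemma rayleigh_identity:
  assumes "finite E" "e \<in> E" "f \<in> E" "e \<noteq> f"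
  shows "pderiv_var e (Zpoly E w) y * pderiv_var f (Zpoly E w) y
      - pderiv_var e (pderiv_var f (Zpoly E w)) y * Zpoly E w y
    = Zpoly E (Delw e (Dvw f w)) y * Zpoly E (Delw f (Dvw e w)) y
      - Zpoly E (Delw f (Delw e w)) y * Zpoly E (Dvw e (Dvw f w)) y"
proof -
  define a where "a = Zpoly E (Delw f (Delw e w)) y"
  define b where "b = Zpoly E (Delw e (Dvw f w)) y"
  define c where "c = Zpoly E (Delw f (Dvw e w)) y"
  define d where "d = Zpoly E (Dvw e (Dvw f w)) y"
  have Z: "Zpoly E w y = Zpoly E (Delw e w) y + y e * Zpoly E (Dvw e w) y"
    by (rule Zpoly_split[OF assms(1,2)])
  have Z1: "Zpoly E (Delw e w) y = a + y f * b"
    unfolding a_def b_def Zpoly_split[OF assms(1,3), of "Delw e w"] Dvw_Delw_comm[OF assms(4)] ..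
  have Z2: "Zpoly E (Dvw e w) y = c + y f * d"
    unfolding c_def d_def Zpoly_split[OF assms(1,3), of "Dvw e w"] Dvw_Dvw_comm ..
  have Z3: "Zpoly E (Dvw f w) y = b + y e * d"
    unfolding b_def d_def Zpoly_split[OF assms(1,2), of "Dvw f w"] ..
  have "pderiv_var e (pderiv_var f (Zpoly E w)) y = d"
    unfolding d_def pderiv_Zpoly[OF assms(1,3)] pderiv_Zpoly[OF assms(1,2)] ..
  moreover have "pderiv_var e (Zpoly E w) y = c + y f * d" using Z2 pderiv_Zpoly[OF assms(1,2)] by simp
  moreover have "pderiv_var f (Zpoly E w) y = b + y e * d" using Z3 pderiv_Zpoly[OF assms(1,3)] by simp
  ultimately show ?thesis unfolding Z Z1 Z2 a_def[symmetric] b_def[symmetric] c_def[symmetric] d_def[symmetric]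
    by (simp add: algebra_simps)
qed

theorem corollary4p10:
  fixes E :: "'a set" and Q :: "'a set set"
  assumes "finite E"
    and "simplicial_complex E Q"
    and "weakly_rayleigh E Q"
  shows "matroid_indep E Q"
proof -
  obtain \<omega> :: "'a set \<Rightarrow> real" where nn: "\<forall>S\<in>Pow E. \<omega> S \<ge> 0"
    and Qdef: "{S\<in>Pow E. \<omega> S > 0} = Q" and ray: "rayleigh E (Zpoly E \<omega>)"
    using assms(3) unfolding weakly_rayleigh_def by blast
  have QE: "Q \<subseteq> Pow E" and Qne: "Q \<noteq> {}"
    using assms(2) unfolding simplicial_complex_def by simp_all
  have Qdown: "\<And>S T. S \<in> Q \<Longrightarrow> T \<subseteq> S \<Longrightarrow> T \<in> Q"
    using assms(2) unfolding simplicial_complex_def by blast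
  have emp: "{} \<in> Q" using Qne Qdown by blast
  have inQ: "S \<in> Q \<longleftrightarrow> S \<subseteq> E \<and> \<omega> S > 0" for S using Qdef by blast
  show ?thesis
    unfolding matroid_indep_def
  proof (intro conjI QE emp ballI allI impI)
    show "T \<in> Q" if "S \<in> Q" "T \<subseteq> S" for S T using that Qdown by blast
  next
    fix A0 B0 assume A0: "A0 \<in> Q" and B0: "B0 \<in> Q" and cAB0: "card A0 < card B0"
    show "\<exists>x\<in>B0 - A0. insert x A0 \<in> Q"
    proof (rule ccontr)
      assume nex: "\<not> ?thesis"
      define P where "P X \<longleftrightarrow> X \<subseteq> E \<and> (\<exists>A B. A \<in> Q \<and> B \<in> Q \<and> A \<subseteq> X \<and> B \<subseteq> X
          \<and> card A < card B \<and> (\<forall>x\<in>X-A. insert x A \<notin> Q))" for X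
      have "P (A0 \<union> B0)" unfolding P_def using A0 B0 cAB0 nex QE by blast
      then obtain X where PX: "P X" and minX: "\<And>Y. P Y \<Longrightarrow> card X \<le> card Y"
        using ex_has_least_nat[of P "A0 \<union> B0" card] by blast
      then obtain A B where XE: "X \<subseteq> E" and A: "A \<in> Q" and B: "B \<in> Q" and AX: "A \<subseteq> X"
        and BX: "B \<subseteq> X" and cAB: "card A < card B" and maxA: "\<forall>x\<in>X-A. insert x A \<notin> Q"
        unfolding P_def by blast
      have finX: "finite X" using XE assms(1) finite_subset by blast
      have finA: "finite A" and finB: "finite B" using AX BX finX finite_subset by blast+
      have key: "card F \<le> card A" if x: "x \<in> X - A" and F: "F \<in> Q" "F \<subseteq> X - {x}" for x F
      proof (rule ccontr)
        assume "\<not> card F \<le> card A"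
        hence lt: "card A < card F" by simp
        have h1: "A \<subseteq> X - {x}" "X - {x} \<subseteq> E" "\<forall>z\<in>X - {x} - A. insert z A \<notin> Q"
          using XE AX x maxA by auto
        have "P (X - {x})" unfolding P_def using h1 A F lt by blast
        hence "card X \<le> card (X - {x})" by (rule minX)
        moreover have "card (X - {x}) < card X" using finX x by (meson DiffD1 card_Diff1_less)
        ultimately show False by simp
      qed
      have XAB: "X - A \<subseteq> B"
      proof
        fix x assume x: "x \<in> X - A"
        show "x \<in> B"
        proof (rule ccontr)
          assume "x \<notin> B"
          hence "card B \<le> card A" using key[OF x B] BX by blast
          thus False using cAB by simp
        qed
      qed
      obtain e where e: "e \<in> X - A"
      proof -
        have "\<not> X \<subseteq> A"
        proof
          assume "X \<subseteq> A"
          hence "card B \<le> card A" using BX finA by (meson card_mono order_trans)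
          thus False using cAB by simp
        qed
        thus ?thesis using that by blast
      qed
      obtain f where f: "f \<in> X - A" "f \<noteq> e"
      proof -
        have "\<not> X - A \<subseteq> {e}"
        proof
          assume sub: "X - A \<subseteq> {e}"
          have Bsub: "B \<subseteq> insert e A" using sub BX by blast
          have "card (insert e A) = card A + 1" using e finA by simp
          hence "card (insert e A) \<le> card B" using cAB by simp
          hence "B = insert e A" using Bsub finA by (meson card_seteq finite_insert)
          thus False using B maxA e by simp
        qed
        thus ?thesis using that by blast
      qed
      have eE: "e \<in> E" and fE: "f \<in> E" using e f XE by auto
      have eB: "e \<in> B" and fB: "f \<in> B" using e f XAB by auto
      have ef: "e \<noteq> f" using f by simp
      have eA: "e \<notin> A" and fA: "f \<notin> A" using e f by auto
      have bnd: "\<forall>S\<in>Pow E. Delw f' (Dvw e' \<omega>) S \<noteq> 0 \<longrightarrow> card (S \<inter> X) + 1 \<le> card A"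
        if e': "e' \<in> X - A" and f': "f' \<in> X - A" "f' \<noteq> e'" for e' f'
      proof (intro ballI impI)
        fix S assume S: "S \<in> Pow E" and ne: "Delw f' (Dvw e' \<omega>) S \<noteq> 0"
        hence fS: "f' \<notin> S" and eS: "e' \<notin> S" and w: "\<omega> (insert e' S) \<noteq> 0"
          by (auto simp: Delw_def Dvw_def split: if_splits)
        have eE': "e' \<in> E" using e' XE by blast
        hence sE: "insert e' S \<subseteq> E" using S by blast
        hence "\<omega> (insert e' S) \<ge> 0" using nn by blast
        hence "\<omega> (insert e' S) > 0" using w by linarith
        hence "insert e' S \<in> Q" using inQ sE by blast
        hence i1: "insert e' S \<inter> X \<in> Q" by (rule Qdown) (rule Int_lower1)
        have i2: "insert e' S \<inter> X \<subseteq> X - {f'}" using fS f' by auto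
        have c1: "card (insert e' S \<inter> X) \<le> card A" by (rule key[OF f'(1) i1 i2])
        have i3: "insert e' S \<inter> X = insert e' (S \<inter> X)" using e' by auto
        have fSX: "finite (S \<inter> X)" using finX by simp
        have "card (insert e' (S \<inter> X)) = card (S \<inter> X) + 1" using fSX eS by simp
        thus "card (S \<inter> X) + 1 \<le> card A" using c1 i3 by simp
      qed
      define SB where "SB = (\<Sum>S\<in>Pow E. Delw e (Dvw f \<omega>) S)"
      define SC where "SC = (\<Sum>S\<in>Pow E. Delw f (Dvw e \<omega>) S)"
      have nnb: "\<forall>S\<in>Pow E. Delw e (Dvw f \<omega>) S \<ge> 0" by (rule Delw_nonneg[OF Dvw_nonneg[OF fE nn]])
      have nnc: "\<forall>S\<in>Pow E. Delw f (Dvw e \<omega>) S \<ge> 0" by (rule Delw_nonneg[OF Dvw_nonneg[OF eE nn]])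
      have nna: "\<forall>S\<in>Pow E. Delw f (Delw e \<omega>) S \<ge> 0" by (rule Delw_nonneg[OF Delw_nonneg[OF nn]])
      have nnd: "\<forall>S\<in>Pow E. Dvw e (Dvw f \<omega>) S \<ge> 0" by (rule Dvw_nonneg[OF eE Dvw_nonneg[OF fE nn]])
      have SBnn: "SB \<ge> 0" unfolding SB_def using nnb by (intro sum_nonneg) blast
      have SCnn: "SC \<ge> 0" unfolding SC_def using nnc by (intro sum_nonneg) blast
      have wA: "\<omega> A > 0" and wB: "\<omega> B > 0" using A B inQ by auto
      define t where "t = SB * SC / (\<omega> A * \<omega> B) + 1"
      have t1: "t \<ge> 1" unfolding t_def using SBnn SCnn wA wB by simp
      define y where "y = (\<lambda>x. if x \<in> X then t else (1::real))"
      have ypos: "\<forall>x\<in>E. y x > 0" and ynn: "\<forall>x. y x \<ge> 0" unfolding y_def using t1 by auto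
      define a where "a = Zpoly E (Delw f (Delw e \<omega>)) y"
      define b where "b = Zpoly E (Delw e (Dvw f \<omega>)) y"
      define c where "c = Zpoly E (Delw f (Dvw e \<omega>)) y"
      define d where "d = Zpoly E (Dvw e (Dvw f \<omega>)) y"
      have ra0: "pderiv_var e (Zpoly E \<omega>) y * pderiv_var f (Zpoly E \<omega>) y
             - pderiv_var e (pderiv_var f (Zpoly E \<omega>)) y * Zpoly E \<omega> y \<ge> 0"
        using ray eE fE ef ypos unfolding rayleigh_def by blast
      have ra: "b * c - a * d \<ge> 0"
        using ra0 unfolding rayleigh_identity[OF assms(1) eE fE ef] a_def b_def c_def d_def .
      have tb: "t * b \<le> SB * t ^ card A" unfolding b_def SB_def y_def
        by (rule Zpoly_upper[OF assms(1) nnb t1 bnd[OF f(1) e ef]])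
      have tc: "t * c \<le> SC * t ^ card A" unfolding c_def SC_def y_def
        by (rule Zpoly_upper[OF assms(1) nnc t1 bnd[OF e f(1) f(2)]])
      have b0: "b \<ge> 0" unfolding b_def by (rule Zpoly_nonneg[OF nnb ynn])
      have c0: "c \<ge> 0" unfolding c_def by (rule Zpoly_nonneg[OF nnc ynn])
      have "Delw f (Delw e \<omega>) A * prod y A \<le> a" unfolding a_def
        by (rule Zpoly_lower[OF assms(1) nna ynn]) (use AX XE in blast)
      moreover have "Delw f (Delw e \<omega>) A = \<omega> A" using eA fA by (simp add: Delw_def)
      moreover have "prod y A = t ^ card A" unfolding y_def using prod_tX[OF finA, of X t] AX
        by (simp add: Int_absorb2)
      ultimately have ta: "\<omega> A * t ^ card A \<le> a" by simp
      define k where "k = card (B - {e, f})"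
      have "card {e, f} \<le> card B" using eB fB finB by (intro card_mono) auto
      hence "card B \<ge> 2" using ef by simp
      hence cB: "card B = k + 2" unfolding k_def using eB fB ef finB
        by (simp add: card_Diff_subset)
      have "Dvw e (Dvw f \<omega>) (B - {e, f}) * prod y (B - {e, f}) \<le> d" unfolding d_def
        by (rule Zpoly_lower[OF assms(1) nnd ynn]) (use BX XE in blast)
      moreover have "insert f (insert e (B - {e, f})) = B" using eB fB by auto
      hence "Dvw e (Dvw f \<omega>) (B - {e, f}) = \<omega> B" using ef by (simp add: Dvw_def)
      moreover have "prod y (B - {e, f}) = t ^ k" unfolding y_def k_def
      proof -
        have "(B - {e, f}) \<inter> X = B - {e, f}" using BX by blast
        thus "(\<Prod>x\<in>B - {e, f}. if x \<in> X then t else 1) = t ^ card (B - {e, f})"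
          using prod_tX[of "B - {e,f}" X t] finB by simp
      qed
      ultimately have td: "\<omega> B * t ^ k \<le> d" by simp
      have "card A \<le> k + 1" using cAB cB by simp
      hence "t ^ card A \<le> t ^ (k + 1)" using t1 by (intro power_increasing) auto
      also have "\<dots> = t * t ^ k" by simp
      finally have "\<omega> B * t ^ card A \<le> t * (\<omega> B * t ^ k)" using wB
        by (metis mult.left_commute mult_le_cancel_left_pos)
      also have "\<dots> \<le> t * d" using td t1 by simp
      finally have tdd: "\<omega> B * t ^ card A \<le> t * d" .
      have tpos: "t ^ card A > 0" using t1 by simp
      have p1: "(\<omega> A * t ^ card A) * (\<omega> B * t ^ card A) \<le> a * (t * d)"
        by (rule mult_mono[OF ta tdd]) (use wB tpos Zpoly_nonneg[OF nna ynn] in \<open>auto simp: a_def\<close>)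
      have p2: "(t * b) * (t * c) \<le> (SB * t ^ card A) * (SC * t ^ card A)"
        by (rule mult_mono[OF tb tc]) (use SBnn tpos b0 c0 t1 in auto)
      have "t * (a * (t * d)) \<le> (t * b) * (t * c)" using ra t1
        by (simp add: algebra_simps)
      hence "t * ((\<omega> A * t ^ card A) * (\<omega> B * t ^ card A)) \<le> (SB * t ^ card A) * (SC * t ^ card A)"
        using p1 p2 t1 by (smt (verit) mult_left_mono)
      hence "(t * (\<omega> A * \<omega> B)) * (t ^ card A * t ^ card A) \<le> (SB * SC) * (t ^ card A * t ^ card A)"
        by (simp add: algebra_simps)
      hence "t * (\<omega> A * \<omega> B) \<le> SB * SC" using tpos by simp
      moreover have "t * (\<omega> A * \<omega> B) = SB * SC + \<omega> A * \<omega> B"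
        unfolding t_def using wA wB by (simp add: field_simps)
      ultimately show False using wA wB by (smt (verit) mult_pos_pos)
    qed
  qed
qed

end
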